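(* Let $X_1,X_2,\ldots$ be i.i.d. real random variables with distribution function $F$ having finite variance and a continuous density $f$. Let $\hat F_n$ be the empirical distribution function of $X_1,\ldots,X_n$. If the two-sided hazard function satisfies $h(x)\to\infty$ as $|x|\to\infty$, then Condition 1 holds: \[ n\int_0^{1/n}\bigl(\hat F_n^{-1}(p)-F^{-1}(p)\bigr)^2dp\xrightarrow{p}0 \quad\text{and}\quad n\int_{(n-1)/n}^1\bigl(\hat F_n^{-1}(p)-F^{-1}(p)\bigr)^2dp\xrightarrow{p}0 \] as $n\to\infty$. Moreover, if $f>0$ on $\{x: 0<F(x)<1\}$ and Condition 2 holds, namely \[ \int_{\{x:\,0<F(x)<1\}}\frac{F(x)(1-F(x))}{f(x)}\,dx<\infty, \] then Condition 1 holds.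
   Context: Here $F^{-1}(p)=\inf\{x: F(x)\ge p\}$ and $\xi_p=F^{-1}(p)$. The empirical distribution function is $\hat F_n(x)=n^{-1}\sum_{i=1}^n\mathbf 1_{\{X_i\le x\}}$, with $\hat F_n^{-1}$ defined in the same way. Let $\bar F(x)=\mathbb P(X>x)=1-F(x)$. The two-sided hazard function is $h(x)=f(x)/\bar F(x)$ for $x\ge\xi_{1/2}$ and $h(x)=f(x)/F(x)$ for $x<\xi_{1/2}$. *)

theory Defs
  imports "HOL-Probability.Probability"
begin

definition quantile :: "(real \<Rightarrow> real) \<Rightarrow> real \<Rightarrow> real" where
  "quantile G p = Inf {x. p \<le> G x}"

definition emp_cdf :: "(nat \<Rightarrow> 'a \<Rightarrow> real) \<Rightarrow> nat \<Rightarrow> 'a \<Rightarrow> real \<Rightarrow> real" where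
  "emp_cdf X n w x = real (card {i. i < n \<and> X i w \<le> x}) / real n"

definition hazard :: "(real \<Rightarrow> real) \<Rightarrow> (real \<Rightarrow> real) \<Rightarrow> real \<Rightarrow> real" where
  "hazard F f x = (if quantile F (1/2) \<le> x then f x / (1 - F x) else f x / F x)"

definition conv_prob_zero :: "'a measure \<Rightarrow> (nat \<Rightarrow> 'a \<Rightarrow> ennreal) \<Rightarrow> bool" where
  "conv_prob_zero M Y \<longleftrightarrow>
     (\<forall>e>0. (\<lambda>n. measure M {w \<in> space M. Y n w > ennreal e}) \<longlonglongrightarrow> 0)"

definition condition1 :: "'a measure \<Rightarrow> (nat \<Rightarrow> 'a \<Rightarrow> real) \<Rightarrow> (real \<Rightarrow> real) \<Rightarrow> bool" where
  "condition1 M X F \<longleftrightarrow>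
     conv_prob_zero M (\<lambda>n w. ennreal (real n) *
        (\<integral>\<^sup>+ p \<in> {0..1/real n}.
            ennreal ((quantile (emp_cdf X n w) p - quantile F p)\<^sup>2) \<partial>lborel)) \<and>
     conv_prob_zero M (\<lambda>n w. ennreal (real n) *
        (\<integral>\<^sup>+ p \<in> {(real n - 1)/real n..1}.
            ennreal ((quantile (emp_cdf X n w) p - quantile F p)\<^sup>2) \<partial>lborel))"

end

theory Submission
  imports Defs
begin

lemma quantile_props:
  fixes F :: "real \<Rightarrow> real"
  assumes cont: "continuous_on UNIV F" and mono: "mono F"
    and bot: "(F \<longlongrightarrow> 0) at_bot" and top: "(F \<longlongrightarrow> 1) at_top"
    and p: "0 < p" "p < 1"
  shows "F (quantile F p) = p" and "quantile F p \<le> x \<longleftrightarrow> p \<le> F x"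
proof -
  define S where "S = {x. p \<le> F x}"
  have "eventually (\<lambda>x. F x > p) at_top" using top p by (simp add: order_tendstoD)
  then obtain x1 where x1: "\<And>x. x \<ge> x1 \<Longrightarrow> F x > p" by (auto simp: eventually_at_top_linorder)
  have "eventually (\<lambda>x. F x < p) at_bot" using bot p by (simp add: order_tendstoD)
  then obtain b where b: "\<And>x. x \<le> b \<Longrightarrow> F x < p" by (auto simp: eventually_at_bot_linorder)
  have "x1 \<in> S" using x1[of x1] by (simp add: S_def)
  then have ne: "S \<noteq> {}" by blast
  have bdd: "bdd_below S"
  proof (rule bdd_belowI)
    fix x assume "x \<in> S"
    show "b \<le> x"
    proof (rule ccontr)
      assume "\<not> b \<le> x"
      then have "F x < p" using b by simp
      with \<open>x \<in> S\<close> show False by (simp add: S_def)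
    qed
  qed
  have cl: "closed S" unfolding S_def
    by (intro closed_Collect_le continuous_intros) (use cont in \<open>auto simp: continuous_on_eq_continuous_at\<close>)
  have qS: "quantile F p \<in> S" unfolding quantile_def S_def[symmetric]
    using closed_contains_Inf[OF ne bdd cl] .
  have low: "\<And>x. x \<in> S \<Longrightarrow> quantile F p \<le> x" unfolding quantile_def S_def[symmetric]
    using bdd by (rule cInf_lower[rotated])
  have lt: "F x < p" if "x < quantile F p" for x using low[of x] that by (force simp: S_def)
  show iff: "quantile F p \<le> x \<longleftrightarrow> p \<le> F x"
    using qS low mono by (auto simp: S_def mono_def intro: order_trans)
  show "F (quantile F p) = p"
  proof (rule ccontr)
    assume "F (quantile F p) \<noteq> p"
    with qS have gt: "F (quantile F p) > p" by (auto simp: S_def)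
    have "isCont F (quantile F p)" using cont by (simp add: continuous_on_eq_continuous_at)
    then have "eventually (\<lambda>x. F x > p) (at (quantile F p))"
      using gt by (simp add: isCont_def order_tendstoD)
    then have "eventually (\<lambda>x. F x > p) (at_left (quantile F p))"
      by (simp add: eventually_at_split)
    then obtain b where "b < quantile F p" "\<And>y. b < y \<Longrightarrow> y < quantile F p \<Longrightarrow> F y > p"
      unfolding eventually_at_left_field by blast
    then obtain y where "y < quantile F p" "F y > p"
      by (metis dense)
    with lt show False by fastforce
  qed
qed

lemma F_integral:
  fixes X0 :: "'a \<Rightarrow> real" and F f :: "real \<Rightarrow> real"
  assumes P: "prob_space M" and Xm: "X0 \<in> borel_measurable M"
    and Fdef: "\<And>x. F x = measure M {w \<in> space M. X0 w \<le> x}"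
    and fnn: "\<And>x. 0 \<le> f x" and fc: "continuous_on UNIV f"
    and dist: "distributed M lborel X0 (\<lambda>x. ennreal (f x))"
    and ab: "a \<le> b"
  shows "F b - F a = integral {a..b} f"
proof -
  interpret prob_space M by fact
  have meas: "X0 -` {a<..b} \<inter> space M \<in> sets M" by (rule measurable_sets[OF Xm]) (rule greaterThanAtMost_borel)
  have un: "{w \<in> space M. X0 w \<le> b} = {w \<in> space M. X0 w \<le> a} \<union> (X0 -` {a<..b} \<inter> space M)"
    using ab by auto
  have "F b = F a + measure M (X0 -` {a<..b} \<inter> space M)"
    unfolding Fdef un
    by (rule finite_measure_Union) (use Xm in \<open>auto\<close>)
  moreover have "emeasure M (X0 -` {a<..b} \<inter> space M) = ennreal (integral {a..b} f)"
  proof -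
    have "emeasure M (X0 -` {a<..b} \<inter> space M) = (\<integral>\<^sup>+x. ennreal (f x) * indicator {a<..b} x \<partial>lborel)"
      by (rule distributed_emeasure[OF dist]) simp
    also have "\<dots> = (\<integral>\<^sup>+x. ennreal (f x) * indicator {a..b} x \<partial>lborel)"
      by (rule nn_integral_cong_AE) (use AE_lborel_singleton[of a] in \<open>eventually_elim, auto simp: indicator_def\<close>)
    also have "\<dots> = ennreal (integral {a..b} f)"
    proof (rule nn_integral_has_integral_lebesgue')
      show "(f has_integral integral {a..b} f) {a..b}"
        by (rule integrable_integral, rule integrable_continuous_real, rule continuous_on_subset[OF fc]) auto
    qed (use fnn in auto)
    finally show ?thesis .
  qed
  then have "measure M (X0 -` {a<..b} \<inter> space M) = integral {a..b} f"
  proof -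
    have "0 \<le> integral {a..b} f" by (rule integral_nonneg) (auto intro: integrable_continuous_real continuous_on_subset[OF fc] fnn)
    then show ?thesis using \<open>emeasure M _ = _\<close> by (simp add: measure_def)
  qed
  ultimately show ?thesis by simp
qed

lemma F_props:
  fixes X0 :: "'a \<Rightarrow> real" and F f :: "real \<Rightarrow> real"
  assumes P: "prob_space M" and Xm: "X0 \<in> borel_measurable M"
    and Fdef: "\<And>x. F x = measure M {w \<in> space M. X0 w \<le> x}"
    and fnn: "\<And>x. 0 \<le> f x" and fc: "continuous_on UNIV f"
    and dist: "distributed M lborel X0 (\<lambda>x. ennreal (f x))"
  shows "\<And>x. (F has_real_derivative f x) (at x)" and "mono F"
    and "(F \<longlongrightarrow> 0) at_bot" and "(F \<longlongrightarrow> 1) at_top"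
    and "\<And>x. 0 \<le> F x" and "\<And>x. F x \<le> 1" and "continuous_on UNIV F"
proof -
  interpret prob_space M by fact
  note FI = F_integral[OF P Xm Fdef fnn fc dist]
  show D: "(F has_real_derivative f x) (at x)" for x
  proof -
    have "((\<lambda>y. F (x-1) + integral {x-1..y} f) has_real_derivative f x) (at x within {x-1..x+1})"
      using DERIV_add[OF DERIV_const[of "F (x-1)"] integral_has_real_derivative[of "x-1" "x+1" f x]]
        continuous_on_subset[OF fc] by auto
    then have "((\<lambda>y. F (x-1) + integral {x-1..y} f) has_real_derivative f x) (at x)"
      by (simp add: at_within_Icc_at)
    then show ?thesis
    proof (rule has_field_derivative_transform_within_open)
      show "open {x-1<..<x+1}" by simp
      show "x \<in> {x-1<..<x+1}" by simp
      fix y assume "y \<in> {x-1<..<x+1}"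
      then show "F (x - 1) + integral {x - 1..y} f = F y" using FI[of "x-1" y] by simp
    qed
  qed
  show "continuous_on UNIV F"
    by (rule DERIV_continuous_on[of UNIV F f]) (use D in auto)
  show "mono F"
  proof (rule monoI)
    fix a b :: real assume "a \<le> b"
    have "0 \<le> integral {a..b} f" by (rule integral_nonneg) (auto intro: integrable_continuous_real continuous_on_subset[OF fc] fnn)
    then show "F a \<le> F b" using FI[OF \<open>a \<le> b\<close>] by simp
  qed
  have Fcdf: "F = cdf (distr M borel X0)"
    by (rule ext) (simp add: Fdef cdf_def measure_distr Xm vimage_def Int_def conj_commute)
  interpret R: real_distribution "distr M borel X0" using Xm by simp
  show "(F \<longlongrightarrow> 0) at_bot" unfolding Fcdf by (rule R.cdf_lim_at_bot)
  show "(F \<longlongrightarrow> 1) at_top" unfolding Fcdf by (rule R.cdf_lim_at_top_prob)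
  show "0 \<le> F x" for x unfolding Fcdf by (rule R.cdf_nonneg)
  show "F x \<le> 1" for x unfolding Fcdf by (rule R.cdf_bounded_prob)
qed

definition tailc :: "(real \<Rightarrow> real) \<Rightarrow> bool" where
  "tailc F \<longleftrightarrow> (\<forall>d>0. \<exists>t0>0. \<forall>y z. y \<le> z \<and> 0 < F y \<and> F z \<le> t0 \<longrightarrow> z - y \<le> d * (1 + ln (F z / F y)))"

lemma tailc_hazard:
  fixes F f :: "real \<Rightarrow> real"
  assumes D: "\<And>x. (F has_real_derivative f x) (at x)" and mo: "mono F" and Fnn: "\<And>x. 0 \<le> F x"
    and H: "\<And>M. \<exists>x0. \<forall>x\<le>x0. M \<le> f x / F x"
  shows "tailc F"
  unfolding tailc_def
proof (intro allI impI)
  fix d :: real assume d: "0 < d"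
  obtain x0 where x0: "\<And>x. x \<le> x0 \<Longrightarrow> 1/d \<le> f x / F x" using H[of "1/d"] by blast
  have Fx0: "0 < F x0"
  proof (rule ccontr)
    assume "\<not> 0 < F x0" then have "F x0 = 0" using Fnn[of x0] by simp
    then show False using x0[of x0] d by simp
  qed
  show "\<exists>t0>0. \<forall>y z. y \<le> z \<and> 0 < F y \<and> F z \<le> t0 \<longrightarrow> z - y \<le> d * (1 + ln (F z / F y))"
  proof (intro exI[of _ "F x0 / 2"] conjI allI impI)
    show "0 < F x0 / 2" using Fx0 by simp
    fix y z assume yz: "y \<le> z \<and> 0 < F y \<and> F z \<le> F x0 / 2"
    have zx0: "z \<le> x0"
    proof (rule ccontr)
      assume "\<not> z \<le> x0" then have "F x0 \<le> F z" using mo by (simp add: mono_def)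
      then show False using yz Fx0 by simp
    qed
    have Fpos: "0 < F x" if "y \<le> x" for x using yz mo that by (smt (verit) monoD)
    define psi where "psi = (\<lambda>x. d * ln (F x) - x)"
    have dpsi: "(psi has_real_derivative d * (f x / F x) - 1) (at x)" if "y \<le> x" for x
    proof -
      have "((\<lambda>x. ln (F x)) has_real_derivative (1 / F x) * f x) (at x)"
        using DERIV_chain2[OF DERIV_ln_divide[OF Fpos[OF that]] D] .
      from DERIV_diff[OF DERIV_cmult[OF this, of d] DERIV_ident]
      have "((\<lambda>x. d * ln (F x) - x) has_real_derivative d * (f x / F x) - 1) (at x)" by simp
      then show ?thesis unfolding psi_def .
    qed
    have "psi y \<le> psi z"
    proof (rule DERIV_nonneg_imp_increasing_open[of y z psi])
      show "y \<le> z" using yz by simp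
      fix x assume x: "y < x" "x < z"
      have "1/d \<le> f x / F x" using x0[of x] x zx0 by simp
      then have "1 \<le> d * (f x / F x)" using d by (simp add: field_simps)
      then show "\<exists>y. (psi has_real_derivative y) (at x) \<and> 0 \<le> y"
        using dpsi[of x] x by auto
    next
      show "continuous_on {y..z} psi"
        by (rule DERIV_continuous_on[where D="\<lambda>x. d * (f x / F x) - 1"])
           (use dpsi in \<open>auto intro: has_field_derivative_at_within\<close>)
    qed
    then have "z - y \<le> d * (ln (F z) - ln (F y))" unfolding psi_def by (simp add: algebra_simps)
    also have "\<dots> = d * ln (F z / F y)" using Fpos[of z] Fpos[of y] yz by (simp add: ln_div)
    also have "\<dots> \<le> d * (1 + ln (F z / F y))" using d by simp
    finally show "z - y \<le> d * (1 + ln (F z / F y))" .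
  qed
qed

lemma amgm_aux: fixes a :: real assumes "0 < a" shows "1 \<le> a + 1 / a"
proof -
  have "0 \<le> (a - 1)^2" by simp
  then have "a \<le> a * a + 1" by (simp add: power2_eq_square algebra_simps) (smt (verit) \<open>0 < a\<close> mult_pos_pos)
  then show ?thesis using assms by (simp add: field_simps)
qed

lemma tailc_cond2:
  fixes F f :: "real \<Rightarrow> real"
  assumes D: "\<And>x. (F has_real_derivative f x) (at x)" and mo: "mono F"
    and Fnn: "\<And>x. 0 \<le> F x" and Fle: "\<And>x. F x \<le> 1"
    and fpos: "\<And>x. 0 < F x \<Longrightarrow> F x < 1 \<Longrightarrow> 0 < f x"
    and fc: "continuous_on UNIV f" and fnn: "\<And>x. 0 \<le> f x"
    and fin: "(\<integral>\<^sup>+ x \<in> {x. 0 < F x \<and> F x < 1}. ennreal (F x * (1 - F x) / f x) \<partial>lborel) < \<infinity>"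
  shows "tailc F"
  unfolding tailc_def
proof (intro allI impI)
  fix d :: real assume d: "0 < d"
  have Fc: "continuous_on UNIV F"
    by (rule DERIV_continuous_on[of UNIV F f]) (use D in auto)
  have Fm[measurable]: "F \<in> borel_measurable borel" using Fc by (rule borel_measurable_continuous_onI)
  have fm[measurable]: "f \<in> borel_measurable borel" using fc by (rule borel_measurable_continuous_onI)
  define g where "g x = ennreal (F x * (1 - F x) / f x)" for x
  have gm[measurable]: "g \<in> borel_measurable borel" unfolding g_def by measurable
  define h where "h k x = g x * indicator {x. 0 < F x \<and> F x \<le> 1 / (real k + 2)} x" for k x
  have hm[measurable]: "h k \<in> borel_measurable borel" for k unfolding h_def by measurable
  have dec: "decseq h"
  proof (rule decseq_SucI, rule le_funI)
    fix k x
    have "1 / (real (Suc k) + 2) \<le> 1 / (real k + 2)" by (simp add: frac_le)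
    then show "h (Suc k) x \<le> h k x" unfolding h_def
      by (auto simp: indicator_def intro!: mult_left_mono)
  qed
  have h0: "(\<integral>\<^sup>+x. h k x \<partial>lborel) < \<infinity>" for k
  proof -
    have "(\<integral>\<^sup>+x. h k x \<partial>lborel) \<le> (\<integral>\<^sup>+ x \<in> {x. 0 < F x \<and> F x < 1}. ennreal (F x * (1 - F x) / f x) \<partial>lborel)"
    proof (rule nn_integral_mono)
      fix x
      have "1 / (real k + 2) < 1" by simp
      then have "F x \<le> 1 / (real k + 2) \<Longrightarrow> F x < 1" by linarith
      then show "h k x \<le> ennreal (F x * (1 - F x) / f x) * indicator {x. 0 < F x \<and> F x < 1} x"
        unfolding h_def g_def by (auto simp: indicator_def)
    qed
    then show ?thesis using fin by (simp add: le_less_trans)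
  qed
  have inf0: "(INF k. h k x) = 0" for x
  proof (cases "0 < F x")
    case True
    obtain k :: nat where "1 / F x < real k" using reals_Archimedean2 by blast
    then have "1 / (real k + 2) < F x" using True by (simp add: field_simps)
    then have "h k x = 0" unfolding h_def by (simp add: indicator_def)
    then show ?thesis by (metis INF_lower iso_tuple_UNIV_I le_zero_eq)
  next
    case False
    then have "h 0 x = 0" unfolding h_def by (simp add: indicator_def)
    then show ?thesis by (metis INF_lower iso_tuple_UNIV_I le_zero_eq)
  qed
  have "(INF k. (\<integral>\<^sup>+x. h k x \<partial>lborel)) = (\<integral>\<^sup>+x. (INF k. h k x) \<partial>lborel)"
    by (rule nn_integral_monotone_convergence_INF_decseq[symmetric]) (use dec h0 in auto)
  also have "\<dots> = 0" by (simp add: inf0)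
  finally have "(INF k. (\<integral>\<^sup>+x. h k x \<partial>lborel)) < ennreal (d^2 / 2)" using d by simp
  then obtain k where k: "(\<integral>\<^sup>+x. h k x \<partial>lborel) < ennreal (d^2 / 2)" by (auto simp: INF_less_iff)
  define t0 where "t0 = 1 / (real k + 2)"
  have t0: "0 < t0" "t0 \<le> 1/2" unfolding t0_def by (auto simp: field_simps)
  show "\<exists>t0>0. \<forall>y z. y \<le> z \<and> 0 < F y \<and> F z \<le> t0 \<longrightarrow> z - y \<le> d * (1 + ln (F z / F y))"
  proof (intro exI[of _ t0] conjI allI impI)
    show "0 < t0" by fact
    fix y z assume yz: "y \<le> z \<and> 0 < F y \<and> F z \<le> t0"
    have Fpos: "0 < F x" if "y \<le> x" for x using yz mo that by (smt (verit) monoD)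
    have Fsm: "F x \<le> t0" if "x \<le> z" for x using yz mo that by (smt (verit) monoD)
    have fp: "0 < f x" if "y \<le> x" "x \<le> z" for x using fpos[OF Fpos[OF that(1)]] Fsm[OF that(2)] t0 by simp
    have c1: "continuous_on {y..z} (\<lambda>u. F u / f u)"
      by (intro continuous_intros continuous_on_subset[OF Fc] continuous_on_subset[OF fc]) (use fp in force)+
    have c2: "continuous_on {y..z} (\<lambda>u. F u * (1 - F u) / f u)"
      by (intro continuous_intros continuous_on_subset[OF Fc] continuous_on_subset[OF fc]) (use fp in force)+
    define Phi where "Phi = (\<lambda>x. integral {y..x} (\<lambda>u. F u / f u))"
    define psi where "psi = (\<lambda>x. Phi x / d + d * ln (F x) - x)"
    have dpsi: "(psi has_real_derivative (F x / f x) / d + d * (f x / F x) - 1) (at x within {y..z})"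
      if "x \<in> {y..z}" for x
    proof -
      have a: "(Phi has_real_derivative F x / f x) (at x within {y..z})"
        unfolding Phi_def by (rule integral_has_real_derivative[OF c1 that])
      have "((\<lambda>x. ln (F x)) has_real_derivative (1 / F x) * f x) (at x)"
        using DERIV_chain2[OF DERIV_ln_divide[OF Fpos] D] that by simp
      then have b: "((\<lambda>x. ln (F x)) has_real_derivative (1 / F x) * f x) (at x within {y..z})"
        by (rule has_field_derivative_at_within)
      from DERIV_diff[OF DERIV_add[OF DERIV_cdivide[OF a, of d] DERIV_cmult[OF b, of d]] DERIV_ident]
      have "((\<lambda>x. Phi x / d + d * ln (F x) - x) has_real_derivative (F x / f x) / d + d * (f x / F x) - 1) (at x within {y..z})"
        by simp
      then show ?thesis unfolding psi_def .
    qed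
    have "psi y \<le> psi z"
    proof (rule DERIV_nonneg_imp_increasing_open[of y z psi])
      show "y \<le> z" using yz by simp
      fix x assume x: "y < x" "x < z"
      have pos: "0 < F x / (d * f x)" using Fpos[of x] fp[of x] x d by simp
      have "1 \<le> F x / (d * f x) + 1 / (F x / (d * f x))" by (rule amgm_aux[OF pos])
      then have "0 \<le> (F x / f x) / d + d * (f x / F x) - 1" by (simp add: field_simps)
      moreover have "(psi has_real_derivative (F x / f x) / d + d * (f x / F x) - 1) (at x)"
        using dpsi[of x] x by (simp add: at_within_Icc_at)
      ultimately show "\<exists>y. (psi has_real_derivative y) (at x) \<and> 0 \<le> y" by blast
    next
      show "continuous_on {y..z} psi"
        by (rule DERIV_continuous_on[OF dpsi])
    qed
    then have main: "z - y \<le> Phi z / d + d * (ln (F z) - ln (F y))"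
      unfolding psi_def Phi_def by (simp add: algebra_simps)
    have "Phi z \<le> integral {y..z} (\<lambda>u. 2 * (F u * (1 - F u) / f u))"
      unfolding Phi_def
    proof (rule integral_le)
      show "(\<lambda>u. F u / f u) integrable_on {y..z}" by (rule integrable_continuous_real[OF c1])
      show "(\<lambda>u. 2 * (F u * (1 - F u) / f u)) integrable_on {y..z}"
        by (rule integrable_continuous_real) (intro continuous_intros c2)
      fix u assume u: "u \<in> {y..z}"
      have "F u \<le> 1/2" using Fsm[of u] u t0 by simp
      then have "F u \<le> 2 * (F u * (1 - F u))" using Fpos[of u] u by (simp add: algebra_simps)
      then show "F u / f u \<le> 2 * (F u * (1 - F u) / f u)" using fp[of u] u by (simp add: divide_right_mono)
    qed
    also have "\<dots> = 2 * integral {y..z} (\<lambda>u. F u * (1 - F u) / f u)" using integral_cmul[of _ 2 "\<lambda>u. F u * (1 - F u) / f u"] by simp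
    also have "\<dots> \<le> d^2"
    proof -
      have I: "((\<lambda>u. F u * (1 - F u) / f u) has_integral integral {y..z} (\<lambda>u. F u * (1 - F u) / f u)) {y..z}"
        by (rule integrable_integral, rule integrable_continuous_real[OF c2])
      have "ennreal (integral {y..z} (\<lambda>u. F u * (1 - F u) / f u)) =
            (\<integral>\<^sup>+x. ennreal (F x * (1 - F x) / f x) * indicator {y..z} x \<partial>lborel)"
        by (rule nn_integral_has_integral_lebesgue'[symmetric, OF _ I])
           (use Fpos fp Fle Fnn in \<open>auto intro!: divide_nonneg_pos mult_nonneg_nonneg\<close>)
      also have "\<dots> \<le> (\<integral>\<^sup>+x. h k x \<partial>lborel)"
      proof (rule nn_integral_mono)
        fix x
        show "ennreal (F x * (1 - F x) / f x) * indicator {y..z} x \<le> h k x"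
          unfolding h_def g_def using Fpos[of x] Fsm[of x] t0_def
          by (auto simp: indicator_def)
      qed
      also have "\<dots> < ennreal (d^2/2)" by fact
      finally have lt: "ennreal (integral {y..z} (\<lambda>u. F u * (1 - F u) / f u)) < ennreal (d^2/2)" .
      have nn: "0 \<le> integral {y..z} (\<lambda>u. F u * (1 - F u) / f u)"
        by (rule integral_nonneg[OF integrable_continuous_real[OF c2]])
           (use Fpos fp Fle Fnn in \<open>auto intro!: divide_nonneg_pos mult_nonneg_nonneg\<close>)
      have "integral {y..z} (\<lambda>u. F u * (1 - F u) / f u) < d^2/2"
        using lt nn by (simp add: ennreal_less_iff)
      then show ?thesis by simp
    qed
    finally have "Phi z / d \<le> d" using d by (simp add: field_simps power2_eq_square)
    with main have "z - y \<le> d + d * (ln (F z) - ln (F y))" by simp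
    also have "\<dots> = d * (1 + ln (F z / F y))" using Fpos[of z] Fpos[of y] yz by (simp add: ln_div algebra_simps)
    finally show "z - y \<le> d * (1 + ln (F z / F y))" .
  qed
qed

lemma log_bound_aux:
  fixes u :: real assumes u: "0 < u" "u \<le> 1"
  shows "(1 + ln (1 / u))^2 \<le> 25 * u powr (-1/2)"
proof -
  define v where "v = u powr (-1/4)"
  have v1: "1 \<le> v" unfolding v_def using u by (simp add: powr_minus ge_one_powr_ge_zero powr_le1 one_le_inverse_iff)
  have "ln (1 / u) = 4 * ln v" unfolding v_def using u by (simp add: ln_powr ln_div)
  also have "\<dots> \<le> 4 * (v - 1)" using ln_le_minus_one[of v] v1 by simp
  finally have l: "ln (1/u) \<le> 4 * v - 4" by simp
  have l0: "0 \<le> ln (1/u)" using u by simp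
  have "(1 + ln (1 / u))^2 \<le> (5 * v)^2"
    by (rule power_mono) (use l l0 v1 in auto)
  also have "\<dots> = 25 * v^2" by (simp add: power_mult_distrib)
  also have "v^2 = u powr (-1/2)" unfolding v_def using u
    by (simp add: power2_eq_square powr_add[symmetric])
  finally show ?thesis by simp
qed

lemma tailcD:
  assumes "tailc G" "0 < d"
  obtains t0 where "0 < t0" "\<And>y z. y \<le> z \<Longrightarrow> 0 < G y \<Longrightarrow> G z \<le> t0 \<Longrightarrow> z - y \<le> d * (1 + ln (G z / G y))"
proof -
  from assms obtain t0 where t0: "0 < t0" and H: "\<forall>y z. y \<le> z \<and> 0 < G y \<and> G z \<le> t0 \<longrightarrow> z - y \<le> d * (1 + ln (G z / G y))"
    unfolding tailc_def by blast
  show thesis by (rule that[OF t0]) (use H in simp)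
qed

lemma tail_L1:
  fixes G :: "real \<Rightarrow> real"
  assumes T: "tailc G" and d: "0 < \<delta>" and e: "0 < \<eta>"
  shows "eventually (\<lambda>n. \<forall>a. G a = 1 / real n \<longrightarrow> real n * G (a - \<delta>) < \<eta>) sequentially"
proof -
  define e' where "e' = min \<eta> (1/2)"
  have e': "0 < e'" "e' \<le> 1/2" "e' \<le> \<eta>" using e by (auto simp: e'_def)
  have lpos: "0 < ln (1 / e')" using e' by simp
  define dd where "dd = \<delta> / (2 * (1 + ln (1 / e')))"
  have dd: "0 < dd" using d lpos by (simp add: dd_def)
  obtain t0 where t0: "0 < t0" and tc: "\<And>y z. y \<le> z \<Longrightarrow> 0 < G y \<Longrightarrow> G z \<le> t0 \<Longrightarrow> z - y \<le> dd * (1 + ln (G z / G y))"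
    using tailcD[OF T dd] by blast
  obtain N :: nat where N: "1 / t0 < real N" using reals_Archimedean2 by blast
  show ?thesis unfolding eventually_sequentially
  proof (intro exI[of _ N] allI impI)
    fix n a assume n: "N \<le> n" and a: "G a = 1 / real n"
    have "1 / t0 < real n" using N n by linarith
    then have npos: "0 < real n" using t0 by (smt (verit) divide_pos_pos)
    have "1 / real n \<le> t0" using \<open>1 / t0 < real n\<close> t0 npos by (simp add: field_simps)
    show "real n * G (a - \<delta>) < \<eta>"
    proof (cases "0 < G (a - \<delta>)")
      case False then show ?thesis using npos e by (smt (verit) mult_nonneg_nonpos)
    next
      case True
      show ?thesis
      proof (rule ccontr)
        assume "\<not> real n * G (a - \<delta>) < \<eta>"
        then have ge: "e' \<le> real n * G (a - \<delta>)" using e' by simp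
        have "\<delta> \<le> dd * (1 + ln (G a / G (a - \<delta>)))"
          using tc[of "a - \<delta>" a] True a \<open>1 / real n \<le> t0\<close> d by simp
        also have "G a / G (a - \<delta>) = 1 / (real n * G (a - \<delta>))" using a by simp
        also have "ln (1 / (real n * G (a - \<delta>))) \<le> ln (1 / e')"
          using ge e' True npos by (simp add: divide_left_mono)
        then have "dd * (1 + ln (1 / (real n * G (a - \<delta>)))) \<le> dd * (1 + ln (1 / e'))"
          using dd by (simp add: mult_left_mono)
        also have "\<dots> = \<delta> / 2" unfolding dd_def using lpos by (simp add: field_simps)
        finally show False using d by simp
      qed
    qed
  qed
qed

lemma tail_L2:
  fixes G :: "real \<Rightarrow> real"
  assumes T: "tailc G" and d: "0 < \<delta>" and mo: "mono G"
  shows "eventually (\<lambda>n. \<forall>a. G a = 1 / real n \<longrightarrow> K \<le> real n * G (a + \<delta>)) sequentially"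
proof -
  define K' where "K' = max K 1"
  have K': "1 \<le> K'" "K \<le> K'" by (auto simp: K'_def)
  have lpos: "0 \<le> ln K'" using K' by simp
  define dd where "dd = \<delta> / (2 * (1 + ln K'))"
  have dd: "0 < dd" using d lpos by (simp add: dd_def)
  obtain t0 where t0: "0 < t0" and tc: "\<And>y z. y \<le> z \<Longrightarrow> 0 < G y \<Longrightarrow> G z \<le> t0 \<Longrightarrow> z - y \<le> dd * (1 + ln (G z / G y))"
    using tailcD[OF T dd] by blast
  obtain N :: nat where N: "K' / t0 < real N" using reals_Archimedean2 by blast
  show ?thesis unfolding eventually_sequentially
  proof (intro exI[of _ N] allI impI)
    fix n a assume n: "N \<le> n" and a: "G a = 1 / real n"
    have "K' / t0 < real n" using N n by linarith
    then have npos: "0 < real n" using t0 K' by (smt (verit) divide_pos_pos)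
    have Kt: "K' / real n \<le> t0" using \<open>K' / t0 < real n\<close> t0 npos by (simp add: field_simps)
    show "K \<le> real n * G (a + \<delta>)"
    proof (rule ccontr)
      assume "\<not> K \<le> real n * G (a + \<delta>)"
      then have lt: "real n * G (a + \<delta>) < K'" using K' by simp
      have Ga: "G a \<le> G (a + \<delta>)" using mo d by (simp add: mono_def)
      have "K' \<le> t0 * real n" using Kt npos by (simp add: field_simps)
      then have "real n * G (a + \<delta>) < real n * t0" using lt by (simp only: mult.commute[of t0])
      then have "G (a + \<delta>) \<le> t0" using npos by simp
      then have "\<delta> \<le> dd * (1 + ln (G (a + \<delta>) / G a))"
        using tc[of a "a + \<delta>"] a npos d by simp
      also have "G (a + \<delta>) / G a = real n * G (a + \<delta>)" using a by simp
      also have "ln (real n * G (a + \<delta>)) \<le> ln K'"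
        using lt Ga a npos by (subst ln_le_cancel_iff) (auto simp: field_simps)
      then have "dd * (1 + ln (real n * G (a + \<delta>))) \<le> dd * (1 + ln K')"
        using dd by (simp add: mult_left_mono)
      also have "\<dots> = \<delta> / 2" unfolding dd_def using lpos by (simp add: field_simps)
      finally show False using d by simp
    qed
  qed
qed

lemma tail_L3:
  fixes G :: "real \<Rightarrow> real"
  assumes T: "tailc G" and c: "0 < c"
  shows "eventually (\<lambda>n. \<forall>a y p. G a = 1 / real n \<and> G y = p \<and> 0 < p \<and> p \<le> 1 / real n \<and> y \<le> a
            \<longrightarrow> (a - y)^2 \<le> c * (real n * p) powr (-1/2)) sequentially"
proof -
  define dd where "dd = sqrt c / 5"
  have dd: "0 < dd" using c by (simp add: dd_def)
  obtain t0 where t0: "0 < t0" and tc: "\<And>y z. y \<le> z \<Longrightarrow> 0 < G y \<Longrightarrow> G z \<le> t0 \<Longrightarrow> z - y \<le> dd * (1 + ln (G z / G y))"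
    using tailcD[OF T dd] by blast
  obtain N :: nat where N: "1 / t0 < real N" using reals_Archimedean2 by blast
  show ?thesis unfolding eventually_sequentially
  proof (intro exI[of _ N] allI impI)
    fix n a y p assume n: "N \<le> n" and H: "G a = 1 / real n \<and> G y = p \<and> 0 < p \<and> p \<le> 1 / real n \<and> y \<le> a"
    have "1 / t0 < real n" using N n by linarith
    then have npos: "0 < real n" using t0 by (smt (verit) divide_pos_pos)
    have "1 / real n \<le> t0" using \<open>1 / t0 < real n\<close> t0 npos by (simp add: field_simps)
    have u: "0 < real n * p" "real n * p \<le> 1" using H npos by (auto simp: field_simps)
    have "a - y \<le> dd * (1 + ln (G a / G y))" using tc[of y a] H \<open>1 / real n \<le> t0\<close> by simp
    also have "G a / G y = 1 / (real n * p)" using H by simp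
    finally have le: "a - y \<le> dd * (1 + ln (1 / (real n * p)))" .
    have "(a - y)^2 \<le> (dd * (1 + ln (1 / (real n * p))))^2"
      by (rule power_mono[OF le]) (use H in simp)
    also have "\<dots> = dd^2 * (1 + ln (1 / (real n * p)))^2" by (simp add: power_mult_distrib)
    also have "\<dots> \<le> dd^2 * (25 * (real n * p) powr (-1/2))"
      by (rule mult_left_mono[OF log_bound_aux[OF u]]) simp
    also have "\<dots> = c * (real n * p) powr (-1/2)" unfolding dd_def using c by (simp add: power_divide)
    finally show "(a - y)^2 \<le> c * (real n * p) powr (-1/2)" .
  qed
qed

lemma reflect_basic:
  fixes F f :: "real \<Rightarrow> real"
  assumes D: "\<And>x. (F has_real_derivative f x) (at x)" and mo: "mono F"
    and Fnn: "\<And>x. 0 \<le> F x" and Fle: "\<And>x. F x \<le> 1"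
  shows "\<And>x. ((\<lambda>x. 1 - F (- x)) has_real_derivative f (- x)) (at x)"
    and "mono (\<lambda>x. 1 - F (- x))" and "\<And>x. 0 \<le> 1 - F (- x)" and "\<And>x. 1 - F (- x) \<le> 1"
proof -
  show "((\<lambda>x. 1 - F (- x)) has_real_derivative f (- x)) (at x)" for x
  proof -
    have "((\<lambda>x. F (- x)) has_real_derivative f (- x) * (- 1)) (at x)"
      using DERIV_chain2[OF D DERIV_minus[OF DERIV_ident]] by simp
    from DERIV_diff[OF DERIV_const[of 1] this] show ?thesis by simp
  qed
  show "mono (\<lambda>x. 1 - F (- x))" using mo by (auto simp: mono_def)
  show "0 \<le> 1 - F (- x)" for x using Fle[of "-x"] by simp
  show "1 - F (- x) \<le> 1" for x using Fnn[of "-x"] by simp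
qed

lemma tailc_upper_hazard:
  fixes F f :: "real \<Rightarrow> real"
  assumes D: "\<And>x. (F has_real_derivative f x) (at x)" and mo: "mono F"
    and Fnn: "\<And>x. 0 \<le> F x" and Fle: "\<And>x. F x \<le> 1"
    and H: "\<And>M. \<exists>x1. \<forall>x\<ge>x1. M \<le> f x / (1 - F x)"
  shows "tailc (\<lambda>x. 1 - F (- x))"
proof (rule tailc_hazard[where f="\<lambda>x. f (- x)"])
  note R = reflect_basic[OF D mo Fnn Fle]
  show "((\<lambda>x. 1 - F (- x)) has_real_derivative f (- x)) (at x)" for x by (rule R(1))
  show "mono (\<lambda>x. 1 - F (- x))" by (rule R(2))
  show "0 \<le> 1 - F (- x)" for x by (rule R(3))
  fix M
  obtain x1 where "\<forall>x\<ge>x1. M \<le> f x / (1 - F x)" using H by blast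
  then have "\<forall>x\<le>-x1. M \<le> f (- x) / (1 - F (- (x)))" by simp
  then show "\<exists>x0. \<forall>x\<le>x0. M \<le> f (- x) / (1 - F (- x))" by blast
qed

lemma tailc_upper_cond2:
  fixes F f :: "real \<Rightarrow> real"
  assumes D: "\<And>x. (F has_real_derivative f x) (at x)" and mo: "mono F"
    and Fnn: "\<And>x. 0 \<le> F x" and Fle: "\<And>x. F x \<le> 1"
    and fpos: "\<And>x. 0 < F x \<Longrightarrow> F x < 1 \<Longrightarrow> 0 < f x"
    and fc: "continuous_on UNIV f" and fnn: "\<And>x. 0 \<le> f x"
    and fin: "(\<integral>\<^sup>+ x \<in> {x. 0 < F x \<and> F x < 1}. ennreal (F x * (1 - F x) / f x) \<partial>lborel) < \<infinity>"
  shows "tailc (\<lambda>x. 1 - F (- x))"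
proof (rule tailc_cond2[where f="\<lambda>x. f (- x)"])
  note R = reflect_basic[OF D mo Fnn Fle]
  show "((\<lambda>x. 1 - F (- x)) has_real_derivative f (- x)) (at x)" for x by (rule R(1))
  show "mono (\<lambda>x. 1 - F (- x))" by (rule R(2))
  show "0 \<le> 1 - F (- x)" for x by (rule R(3))
  show "1 - F (- x) \<le> 1" for x by (rule R(4))
  show "0 < f (- x)" if "0 < 1 - F (- x)" "1 - F (- x) < 1" for x using fpos[of "-x"] that by simp
  show "continuous_on UNIV (\<lambda>x. f (- x))"
    by (rule continuous_on_compose2[OF fc]) (auto intro: continuous_intros)
  show "0 \<le> f (- x)" for x by (rule fnn)
  have Fc: "continuous_on UNIV F"
    by (rule DERIV_continuous_on[of UNIV F f]) (use D in auto)
  have Fm[measurable]: "F \<in> borel_measurable borel" using Fc by (rule borel_measurable_continuous_onI)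
  have fm[measurable]: "f \<in> borel_measurable borel" using fc by (rule borel_measurable_continuous_onI)
  define phi where "phi x = ennreal (F x * (1 - F x) / f x) * indicator {x. 0 < F x \<and> F x < 1} x" for x
  have phim: "phi \<in> borel_measurable borel" unfolding phi_def by measurable
  have eq: "(\<integral>\<^sup>+ x. phi (- x) \<partial>lborel) = (\<integral>\<^sup>+ x. phi x \<partial>lborel)"
    using nn_integral_real_affine[OF phim, of "-1" 0] by simp
  have "(\<integral>\<^sup>+ x \<in> {x. 0 < 1 - F (- x) \<and> 1 - F (- x) < 1}. ennreal ((1 - F (- x)) * (1 - (1 - F (- x))) / f (- x)) \<partial>lborel)
      = (\<integral>\<^sup>+ x. phi (- x) \<partial>lborel)"
    by (rule nn_integral_cong) (auto simp: phi_def indicator_def mult.commute)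
  also have "\<dots> < \<infinity>" using eq fin by (simp add: phi_def)
  finally show "(\<integral>\<^sup>+ x \<in> {x. 0 < 1 - F (- x) \<and> 1 - F (- x) < 1}. ennreal ((1 - F (- x)) * (1 - (1 - F (- x))) / f (- x)) \<partial>lborel) < \<infinity>" .
qed

lemma hazard_split:
  fixes F f :: "real \<Rightarrow> real"
  assumes H: "filterlim (hazard F f) at_top at_infinity"
  shows "\<And>M. \<exists>x0. \<forall>x\<le>x0. M \<le> f x / F x" and "\<And>M. \<exists>x1. \<forall>x\<ge>x1. M \<le> f x / (1 - F x)"
proof -
  fix M
  have "eventually (\<lambda>x. M \<le> hazard F f x) at_infinity"
    using H by (simp add: filterlim_at_top)
  then obtain b where b: "\<And>x. b \<le> norm x \<Longrightarrow> M \<le> hazard F f x"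
    by (auto simp: eventually_at_infinity)
  define xi where "xi = quantile F (1/2)"
  show "\<exists>x0. \<forall>x\<le>x0. M \<le> f x / F x"
  proof (intro exI[of _ "min (- b) (xi - 1)"] allI impI)
    fix x assume x: "x \<le> min (- b) (xi - 1)"
    then have "b \<le> norm x" by auto
    then have "M \<le> hazard F f x" using b[of x] by simp
    then show "M \<le> f x / F x" using x by (simp add: hazard_def xi_def)
  qed
  show "\<exists>x1. \<forall>x\<ge>x1. M \<le> f x / (1 - F x)"
  proof (intro exI[of _ "max b xi"] allI impI)
    fix x assume x: "max b xi \<le> x"
    then have "b \<le> norm x" by auto
    then have "M \<le> hazard F f x" using b[of x] by simp
    then show "M \<le> f x / (1 - F x)" using x by (simp add: hazard_def xi_def)
  qed
qed

lemma emp_quantile_min: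
  fixes X :: "nat \<Rightarrow> 'a \<Rightarrow> real"
  assumes n: "0 < n" and p: "0 < p" "p \<le> 1 / real n"
  shows "quantile (emp_cdf X n w) p = Min ((\<lambda>i. X i w) ` {..<n})"
proof -
  define m where "m = Min ((\<lambda>i. X i w) ` {..<n})"
  have S: "{x. p \<le> emp_cdf X n w x} = {m..}"
  proof (intro set_eqI iffI)
    fix x assume "x \<in> {x. p \<le> emp_cdf X n w x}"
    then have le1: "p \<le> real (card {i. i < n \<and> X i w \<le> x}) / real n" by (simp add: emp_cdf_def)
    have "{i. i < n \<and> X i w \<le> x} \<noteq> {}"
    proof
      assume "{i. i < n \<and> X i w \<le> x} = {}"
      then have "card {i. i < n \<and> X i w \<le> x} = 0" by (simp only: card.empty)
      with le1 p show False by simp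
    qed
    then obtain i where "i < n" "X i w \<le> x" by blast
    then have "m \<le> X i w" unfolding m_def by (intro Min_le) auto
    then show "x \<in> {m..}" using \<open>X i w \<le> x\<close> by simp
  next
    fix x assume "x \<in> {m..}"
    have "m \<in> (\<lambda>i. X i w) ` {..<n}" unfolding m_def using n by (intro Min_in) auto
    then obtain i where i: "i < n" "X i w = m" by auto
    then have "i \<in> {i. i < n \<and> X i w \<le> x}" using \<open>x \<in> {m..}\<close> by simp
    then have "1 \<le> card {i. i < n \<and> X i w \<le> x}"
      by (metis (no_types, lifting) One_nat_def Suc_leI card_gt_0_iff empty_iff finite_nat_set_iff_bounded mem_Collect_eq)
    then have "1 / real n \<le> real (card {i. i < n \<and> X i w \<le> x}) / real n"
      using n by (simp add: divide_right_mono)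
    then show "x \<in> {x. p \<le> emp_cdf X n w x}" using p by (simp add: emp_cdf_def)
  qed
  show ?thesis unfolding quantile_def S m_def[symmetric] by simp
qed

lemma emp_quantile_max:
  fixes X :: "nat \<Rightarrow> 'a \<Rightarrow> real"
  assumes n: "0 < n" and p: "(real n - 1) / real n < p" "p \<le> 1"
  shows "quantile (emp_cdf X n w) p = Max ((\<lambda>i. X i w) ` {..<n})"
proof -
  define m where "m = Max ((\<lambda>i. X i w) ` {..<n})"
  have S: "{x. p \<le> emp_cdf X n w x} = {m..}"
  proof (intro set_eqI iffI)
    fix x assume "x \<in> {x. p \<le> emp_cdf X n w x}"
    then have le: "p \<le> real (card {i. i < n \<and> X i w \<le> x}) / real n" by (simp add: emp_cdf_def)
    have sub: "{i. i < n \<and> X i w \<le> x} \<subseteq> {..<n}" by auto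
    have "card {i. i < n \<and> X i w \<le> x} = n"
    proof (rule ccontr)
      assume "card {i. i < n \<and> X i w \<le> x} \<noteq> n"
      moreover have "card {i. i < n \<and> X i w \<le> x} \<le> n" using card_mono[OF _ sub] by simp
      ultimately have "card {i. i < n \<and> X i w \<le> x} \<le> n - 1" by simp
      then have "real (card {i. i < n \<and> X i w \<le> x}) \<le> real n - 1" using n by linarith
      then have "real (card {i. i < n \<and> X i w \<le> x}) / real n \<le> (real n - 1) / real n"
        using n by (simp add: divide_right_mono)
      then show False using le p by simp
    qed
    then have "{i. i < n \<and> X i w \<le> x} = {..<n}" using card_subset_eq[OF _ sub] by simp
    then have "\<forall>i<n. X i w \<le> x" by blast
    then have "m \<le> x" unfolding m_def using n by (auto intro!: Max.boundedI)
    then show "x \<in> {m..}" by simp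
  next
    fix x assume "x \<in> {m..}"
    have "\<forall>i<n. X i w \<le> x"
    proof (intro allI impI)
      fix i assume "i < n"
      then have "X i w \<le> m" unfolding m_def by (intro Max_ge) auto
      then show "X i w \<le> x" using \<open>x \<in> {m..}\<close> by simp
    qed
    then have "{i. i < n \<and> X i w \<le> x} = {..<n}" by auto
    then show "x \<in> {x. p \<le> emp_cdf X n w x}" using p n by (simp add: emp_cdf_def)
  qed
  show ?thesis unfolding quantile_def S m_def[symmetric] by simp
qed

lemma sq_split: fixes x y :: real shows "(x + y)^2 \<le> 2 * x^2 + 2 * y^2"
proof -
  have "0 \<le> (x - y)^2" by simp
  then show ?thesis by (simp add: power2_eq_square algebra_simps)
qed

lemma int_bound_lower:
  fixes Q q :: "real \<Rightarrow> real" and n :: nat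
  assumes n: "0 < n" and c: "0 \<le> c"
    and B: "\<And>p. 0 < p \<Longrightarrow> p \<le> 1 / real n \<Longrightarrow> (a - q p)^2 \<le> c * (real n * p) powr (-1/2)"
    and Qm: "\<And>p. 0 < p \<Longrightarrow> p \<le> 1 / real n \<Longrightarrow> Q p = m"
  shows "ennreal (real n) * (\<integral>\<^sup>+ p \<in> {0..1 / real n}. ennreal ((Q p - q p)^2) \<partial>lborel) \<le> ennreal (2 * (m - a)^2 + 4 * c)"
proof -
  define w where "w p = 2 * (m - a)^2 + 2 * c * (real n * p) powr (-1/2)" for p
  define W where "W p = 2 * (m - a)^2 * p + 4 * c * sqrt (real n * p) / real n" for p
  have npos: "0 < real n" using n by simp
  have I: "(w has_integral (W (1 / real n) - W 0)) {0..1 / real n}"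
  proof (rule fundamental_theorem_of_calculus_interior_strong[of "{}"])
    show "finite {}" by simp
    show "0 \<le> 1 / real n" by simp
    show "continuous_on {0..1 / real n} W" unfolding W_def by (intro continuous_intros) (use npos in auto)
    fix p assume p: "p \<in> {0<..<1 / real n} - {}"
    then have pp: "0 < real n * p" using npos by simp
    have "(W has_real_derivative 2 * (m - a)^2 * 1 + 4 * c * (inverse (sqrt (real n * p)) / 2 * (real n * 1)) / real n) (at p)"
    proof -
      have d1: "((\<lambda>p. sqrt (real n * p)) has_real_derivative inverse (sqrt (real n * p)) / 2 * (real n * 1)) (at p)"
        using DERIV_chain2[OF DERIV_real_sqrt[OF pp] DERIV_cmult[OF DERIV_ident, of "real n"]] .
      show ?thesis unfolding W_def
        using DERIV_add[OF DERIV_cmult[OF DERIV_ident, of "2*(m-a)^2"] DERIV_cdivide[OF DERIV_cmult[OF d1, of "4*c"], of "real n"]]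
        by simp
    qed
    moreover have "2 * (m - a)^2 * 1 + 4 * c * (inverse (sqrt (real n * p)) / 2 * (real n * 1)) / real n = w p"
    proof -
      have "(real n * p) powr (-1/2) = inverse ((real n * p) powr (1/2))" by (subst powr_minus[symmetric]) simp
      also have "\<dots> = inverse (sqrt (real n * p))" using pp by (simp add: powr_half_sqrt)
      finally show ?thesis unfolding w_def using npos by simp
    qed
    ultimately show "(W has_vector_derivative w p) (at p)"
      by (simp add: has_real_derivative_iff_has_vector_derivative)
  qed
  have WW: "W (1 / real n) - W 0 = (2 * (m - a)^2 + 4 * c) / real n"
    unfolding W_def using npos by (simp add: field_simps)
  have wnn: "0 \<le> w p" for p unfolding w_def using c by simp
  have "(\<integral>\<^sup>+ p \<in> {0..1 / real n}. ennreal ((Q p - q p)^2) \<partial>lborel) \<le> (\<integral>\<^sup>+ p. ennreal (w p) * indicator {0..1 / real n} p \<partial>lborel)"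
  proof (rule nn_integral_mono_AE)
    show "AE p in lborel. ennreal ((Q p - q p)^2) * indicator {0..1 / real n} p \<le> ennreal (w p) * indicator {0..1 / real n} p"
      using AE_lborel_singleton[of 0]
    proof eventually_elim
      case (elim p)
      show ?case
      proof (cases "p \<in> {0..1 / real n}")
        case True
        then have p: "0 < p" "p \<le> 1 / real n" using elim by auto
        have "(Q p - q p)^2 = ((m - a) + (a - q p))^2" using Qm[OF p] by simp
        also have "\<dots> \<le> 2 * (m - a)^2 + 2 * (a - q p)^2" by (rule sq_split)
        also have "\<dots> \<le> w p" unfolding w_def using B[OF p] by simp
        finally show ?thesis using True by (simp add: ennreal_leI)
      qed simp
    qed
  qed
  also have "\<dots> = ennreal ((2 * (m - a)^2 + 4 * c) / real n)"
    using nn_integral_has_integral_lebesgue'[OF _ I] wnn WW by simp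
  finally have "ennreal (real n) * (\<integral>\<^sup>+ p \<in> {0..1 / real n}. ennreal ((Q p - q p)^2) \<partial>lborel)
      \<le> ennreal (real n) * ennreal ((2 * (m - a)^2 + 4 * c) / real n)"
    by (rule mult_left_mono) simp
  also have "\<dots> = ennreal (2 * (m - a)^2 + 4 * c)"
    using npos c by (simp add: ennreal_mult''[symmetric])
  finally show ?thesis .
qed

lemma int_bound_upper:
  fixes Q q :: "real \<Rightarrow> real" and n :: nat
  assumes n: "0 < n" and c: "0 \<le> c"
    and B: "\<And>p. (real n - 1) / real n \<le> p \<Longrightarrow> p < 1 \<Longrightarrow> (q p - b)^2 \<le> c * (real n * (1 - p)) powr (-1/2)"
    and Qm: "\<And>p. (real n - 1) / real n < p \<Longrightarrow> p \<le> 1 \<Longrightarrow> Q p = m"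
  shows "ennreal (real n) * (\<integral>\<^sup>+ p \<in> {(real n - 1) / real n..1}. ennreal ((Q p - q p)^2) \<partial>lborel) \<le> ennreal (2 * (m - b)^2 + 4 * c)"
proof -
  define s where "s = (real n - 1) / real n"
  define w where "w p = 2 * (m - b)^2 + 2 * c * (real n * (1 - p)) powr (-1/2)" for p
  define W where "W p = 2 * (m - b)^2 * p - 4 * c * sqrt (real n * (1 - p)) / real n" for p
  have npos: "0 < real n" using n by simp
  have s1: "1 - s = 1 / real n" unfolding s_def using npos by (simp add: field_simps)
  have I: "(w has_integral (W 1 - W s)) {s..1}"
  proof (rule fundamental_theorem_of_calculus_interior_strong[of "{}"])
    show "finite {}" by simp
    have "0 \<le> 1 / real n" by simp
    then show "s \<le> 1" using s1 by linarith
    show "continuous_on {s..1} W" unfolding W_def by (intro continuous_intros) (use npos in auto)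
    fix p assume p: "p \<in> {s<..<1} - {}"
    then have pp: "0 < real n * (1 - p)" using npos by simp
    have "(W has_real_derivative 2 * (m - b)^2 * 1 - 4 * c * (inverse (sqrt (real n * (1 - p))) / 2 * (real n * (0 - 1))) / real n) (at p)"
    proof -
      have d1: "((\<lambda>p. sqrt (real n * (1 - p))) has_real_derivative inverse (sqrt (real n * (1 - p))) / 2 * (real n * (0 - 1))) (at p)"
        using DERIV_chain2[OF DERIV_real_sqrt[OF pp] DERIV_cmult[OF DERIV_diff[OF DERIV_const[of 1] DERIV_ident], of "real n"]] .
      show ?thesis unfolding W_def
        using DERIV_diff[OF DERIV_cmult[OF DERIV_ident, of "2*(m-b)^2"] DERIV_cdivide[OF DERIV_cmult[OF d1, of "4*c"], of "real n"]]
        by simp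
    qed
    moreover have "2 * (m - b)^2 * 1 - 4 * c * (inverse (sqrt (real n * (1 - p))) / 2 * (real n * (0 - 1))) / real n = w p"
    proof -
      have "(real n * (1 - p)) powr (-1/2) = inverse ((real n * (1 - p)) powr (1/2))" by (subst powr_minus[symmetric]) simp
      also have "\<dots> = inverse (sqrt (real n * (1 - p)))" using pp by (simp add: powr_half_sqrt)
      finally show ?thesis unfolding w_def using npos by simp
    qed
    ultimately show "(W has_vector_derivative w p) (at p)"
      by (simp add: has_real_derivative_iff_has_vector_derivative)
  qed
  have WW: "W 1 - W s = (2 * (m - b)^2 + 4 * c) / real n"
  proof -
    have e1: "real n * (1 - s) = 1" using s1 npos by simp
    have "W 1 - W s = 2 * (m - b)^2 * (1 - s) + 4 * c * sqrt (real n * (1 - s)) / real n"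
      unfolding W_def by (simp add: algebra_simps)
    also have "\<dots> = 2 * (m - b)^2 * (1 / real n) + 4 * c / real n" unfolding e1 s1 by simp
    finally show ?thesis by (simp add: add_divide_distrib)
  qed
  have wnn: "0 \<le> w p" for p unfolding w_def using c by simp
  have "(\<integral>\<^sup>+ p \<in> {s..1}. ennreal ((Q p - q p)^2) \<partial>lborel) \<le> (\<integral>\<^sup>+ p. ennreal (w p) * indicator {s..1} p \<partial>lborel)"
  proof (rule nn_integral_mono_AE)
    show "AE p in lborel. ennreal ((Q p - q p)^2) * indicator {s..1} p \<le> ennreal (w p) * indicator {s..1} p"
      using AE_lborel_singleton[of 1] AE_lborel_singleton[of s]
    proof eventually_elim
      case (elim p)
      show ?case
      proof (cases "p \<in> {s..1}")
        case True
        then have p: "s < p" "p < 1" using elim by auto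
        have "(Q p - q p)^2 = ((m - b) + (b - q p))^2" using Qm[of p] p unfolding s_def by simp
        also have "\<dots> \<le> 2 * (m - b)^2 + 2 * (b - q p)^2" by (rule sq_split)
        also have "(b - q p)^2 = (q p - b)^2" by (simp add: power2_commute)
        also have "2 * (m - b)^2 + 2 * (q p - b)^2 \<le> w p" unfolding w_def using B[of p] p unfolding s_def by simp
        finally show ?thesis using True by (simp add: ennreal_leI)
      qed simp
    qed
  qed
  also have "\<dots> = ennreal ((2 * (m - b)^2 + 4 * c) / real n)"
    using nn_integral_has_integral_lebesgue'[OF _ I] wnn WW by simp
  finally have "ennreal (real n) * (\<integral>\<^sup>+ p \<in> {s..1}. ennreal ((Q p - q p)^2) \<partial>lborel)
      \<le> ennreal (real n) * ennreal ((2 * (m - b)^2 + 4 * c) / real n)"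
    by (rule mult_left_mono) simp
  also have "\<dots> = ennreal (2 * (m - b)^2 + 4 * c)"
    using npos c by (simp add: ennreal_mult''[symmetric])
  finally show ?thesis unfolding s_def .
qed

locale iidsetup =
  fixes M :: "'a measure" and X :: "nat \<Rightarrow> 'a \<Rightarrow> real" and F :: "real \<Rightarrow> real"
  assumes P: "prob_space M"
    and Xm: "\<And>i. X i \<in> borel_measurable M"
    and ind: "prob_space.indep_vars M (\<lambda>_. borel) X UNIV"
    and ide: "\<And>i. distr M borel (X i) = distr M borel (X 0)"
    and Fdef: "\<And>x. F x = measure M {w \<in> space M. X 0 w \<le> x}"
begin

interpretation prob_space M by (rule P)

declare Xm[measurable]

lemma prob_Xle: "measure M {w \<in> space M. X i w \<le> c} = F c"
proof -
  have "measure M {w \<in> space M. X i w \<le> c} = measure M (X i -` {..c} \<inter> space M)"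
    by (rule arg_cong[where f="measure M"]) auto
  also have "\<dots> = measure (distr M borel (X i)) {..c}" by (rule measure_distr[symmetric]) auto
  also have "\<dots> = measure (distr M borel (X 0)) {..c}" by (simp add: ide[of i])
  also have "\<dots> = measure M (X 0 -` {..c} \<inter> space M)" by (rule measure_distr) auto
  also have "\<dots> = F c" unfolding Fdef by (rule arg_cong[where f="measure M"]) auto
  finally show ?thesis .
qed

lemma prob_Xgt: "measure M {w \<in> space M. c < X i w} = 1 - F c"
proof -
  have "{w \<in> space M. c < X i w} = space M - {w \<in> space M. X i w \<le> c}" by auto
  then show ?thesis using prob_compl[of "{w \<in> space M. X i w \<le> c}"] prob_Xle[of i c] by simp
qed

lemma prob_ex_lt: "measure M {w \<in> space M. \<exists>i<n. X i w < c} \<le> real n * F c"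
proof -
  have "measure M {w \<in> space M. \<exists>i<n. X i w < c} \<le> measure M (\<Union>i\<in>{..<n}. {w \<in> space M. X i w \<le> c})"
    by (rule finite_measure_mono) auto
  also have "\<dots> \<le> (\<Sum>i\<in>{..<n}. measure M {w \<in> space M. X i w \<le> c})"
    by (rule finite_measure_subadditive_finite) auto
  also have "\<dots> = real n * F c" by (simp add: prob_Xle)
  finally show ?thesis .
qed

lemma prob_ex_gt: "measure M {w \<in> space M. \<exists>i<n. c < X i w} \<le> real n * (1 - F c)"
proof -
  have "measure M {w \<in> space M. \<exists>i<n. c < X i w} \<le> measure M (\<Union>i\<in>{..<n}. {w \<in> space M. c < X i w})"
    by (rule finite_measure_mono) auto
  also have "\<dots> \<le> (\<Sum>i\<in>{..<n}. measure M {w \<in> space M. c < X i w})"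
    by (rule finite_measure_subadditive_finite) auto
  also have "\<dots> = real n * (1 - F c)" by (simp add: prob_Xgt)
  finally show ?thesis .
qed

lemma prob_all_gt: assumes n: "0 < n" shows "measure M {w \<in> space M. \<forall>i<n. c < X i w} = (1 - F c) ^ n"
proof -
  have "{w \<in> space M. \<forall>i<n. c < X i w} = (\<Inter>i\<in>{..<n}. X i -` {c<..} \<inter> space M)"
    using n by auto
  then have "measure M {w \<in> space M. \<forall>i<n. c < X i w} = (\<Prod>i\<in>{..<n}. measure M (X i -` {c<..} \<inter> space M))"
    using indep_varsD[OF ind, of "{..<n}" "\<lambda>_. {c<..}"] n by auto
  also have "\<dots> = (\<Prod>i\<in>{..<n}. 1 - F c)"
  proof (rule prod.cong)
    fix i
    have "X i -` {c<..} \<inter> space M = {w \<in> space M. c < X i w}" by auto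
    then show "measure M (X i -` {c<..} \<inter> space M) = 1 - F c" using prob_Xgt by simp
  qed simp
  finally show ?thesis by simp
qed

lemma prob_all_lt: assumes n: "0 < n" shows "measure M {w \<in> space M. \<forall>i<n. X i w < c} \<le> F c ^ n"
proof -
  have "measure M {w \<in> space M. \<forall>i<n. X i w < c} \<le> measure M (\<Inter>i\<in>{..<n}. X i -` {..c} \<inter> space M)"
    by (rule finite_measure_mono) (use n in \<open>auto\<close>)
  also have "\<dots> = (\<Prod>i\<in>{..<n}. measure M (X i -` {..c} \<inter> space M))"
    using indep_varsD[OF ind, of "{..<n}" "\<lambda>_. {..c}"] n by auto
  also have "\<dots> = (\<Prod>i\<in>{..<n}. F c)"
  proof (rule prod.cong)
    fix i
    have "X i -` {..c} \<inter> space M = {w \<in> space M. X i w \<le> c}" by auto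
    then show "measure M (X i -` {..c} \<inter> space M) = F c" using prob_Xle by simp
  qed simp
  finally show ?thesis by simp
qed

end

lemma bern_aux:
  fixes x :: real assumes x: "0 \<le> x" "x \<le> 1"
  shows "(1 - x) ^ n \<le> 1 / (1 + real n * x)"
proof -
  have b: "1 + real n * x \<le> (1 + x) ^ n" using Bernoulli_inequality[of x n] x by simp
  have "(1 - x) ^ n * (1 + x) ^ n = (1 - x^2) ^ n" by (simp add: power_mult_distrib[symmetric] power2_eq_square algebra_simps)
  also have "\<dots> \<le> 1" using x by (intro power_le_one) (auto simp: power_le_one)
  finally have "(1 - x) ^ n * (1 + real n * x) \<le> 1"
    using b x by (smt (verit) mult_left_mono zero_le_power)
  moreover have "0 < 1 + real n * x" using x by (smt (verit) mult_nonneg_nonneg of_nat_0_le_iff)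
  ultimately show ?thesis by (simp add: field_simps)
qed

context iidsetup
begin

lemma lower_conv:
  assumes Fc: "continuous_on UNIV F" and mo: "mono F" and bot: "(F \<longlongrightarrow> 0) at_bot"
    and top: "(F \<longlongrightarrow> 1) at_top" and Fnn: "\<And>x. 0 \<le> F x" and Fle: "\<And>x. F x \<le> 1"
    and T: "tailc F"
  shows "conv_prob_zero M (\<lambda>n w. ennreal (real n) *
        (\<integral>\<^sup>+ p \<in> {0..1/real n}. ennreal ((quantile (emp_cdf X n w) p - quantile F p)\<^sup>2) \<partial>lborel))"
proof -
  interpret prob_space M by (rule P)
  define Y where "Y = (\<lambda>n w. ennreal (real n) *
        (\<integral>\<^sup>+ p \<in> {0..1/real n}. ennreal ((quantile (emp_cdf X n w) p - quantile F p)\<^sup>2) \<partial>lborel))"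
  have key: "(\<lambda>n. measure M {w \<in> space M. Y n w > ennreal e}) \<longlonglongrightarrow> 0" if e: "0 < e" for e
  proof (rule LIMSEQ_I)
    fix r :: real assume r: "0 < r"
    define \<delta> where "\<delta> = sqrt e / 2"
    define c where "c = e / 8"
    have dpos: "0 < \<delta>" and cpos: "0 < c" using e by (auto simp: \<delta>_def c_def)
    have rr: "0 < r / 2" using r by simp
    have d2: "\<delta>^2 = e / 4" using e by (simp add: \<delta>_def power_divide)
    have ev: "eventually (\<lambda>n. measure M {w \<in> space M. Y n w > ennreal e} < r) sequentially"
      using tail_L1[OF T dpos rr] tail_L2[OF T dpos mo, of "2/r"] tail_L3[OF T cpos]
        eventually_ge_at_top[of "2::nat"]
    proof eventually_elim
      case (elim n)
      have n0: "0 < n" using elim(4) by simp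
      have np: "0 < 1 / real n" "1 / real n < 1" using elim(4) by auto
      define a where "a = quantile F (1 / real n)"
      have Fa: "F a = 1 / real n" unfolding a_def by (rule quantile_props(1)[OF Fc mo bot top np])
      have B: "(a - quantile F p)^2 \<le> c * (real n * p) powr (-1/2)" if p: "0 < p" "p \<le> 1 / real n" for p
      proof -
        have p1: "p < 1" using p np by linarith
        have Fq: "F (quantile F p) = p" by (rule quantile_props(1)[OF Fc mo bot top p(1) p1])
        have "quantile F p \<le> a" using quantile_props(2)[OF Fc mo bot top p(1) p1, of a] Fa p by simp
        then show ?thesis using elim(3) Fa Fq p by blast
      qed
      define m where "m w = Min ((\<lambda>i. X i w) ` {..<n})" for w
      have bound: "Y n w \<le> ennreal (2 * (m w - a)^2 + 4 * c)" for w
        unfolding Y_def m_def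
        by (rule int_bound_lower[OF n0 _ B emp_quantile_min[OF n0]]) (use cpos in auto)
      have sub: "{w \<in> space M. Y n w > ennreal e} \<subseteq>
          {w \<in> space M. \<exists>i<n. X i w < a - \<delta>} \<union> {w \<in> space M. \<forall>i<n. a + \<delta> < X i w}"
      proof (intro subsetI)
        fix w assume "w \<in> {w \<in> space M. Y n w > ennreal e}"
        then have w: "w \<in> space M" "ennreal e < Y n w" by auto
        show "w \<in> {w \<in> space M. \<exists>i<n. X i w < a - \<delta>} \<union> {w \<in> space M. \<forall>i<n. a + \<delta> < X i w}"
        proof (cases "\<forall>i<n. a + \<delta> < X i w")
          case True then show ?thesis using w by simp
        next
          case nall: False
        have "ennreal e < ennreal (2 * (m w - a)^2 + 4 * c)" using w(2) bound[of w] by (rule less_le_trans)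
        then have "e < 2 * (m w - a)^2 + 4 * c" using e by (simp add: ennreal_less_iff)
        then have gt: "\<delta>^2 < (m w - a)^2" unfolding d2 c_def by simp
        have "\<not> \<bar>m w - a\<bar> \<le> \<delta>"
        proof
          assume "\<bar>m w - a\<bar> \<le> \<delta>"
          then have "(m w - a)^2 \<le> \<delta>^2" by (metis abs_ge_zero power2_abs power_mono)
          with gt show False by simp
        qed
        then have "m w < a - \<delta> \<or> a + \<delta> < m w" by linarith
        moreover have "\<not> a + \<delta> < m w"
        proof
          assume "a + \<delta> < m w"
          have "\<forall>i<n. a + \<delta> < X i w"
          proof (intro allI impI)
            fix i assume "i < n"
            then have "m w \<le> X i w" unfolding m_def by (intro Min_le) auto
            with \<open>a + \<delta> < m w\<close> show "a + \<delta> < X i w" by simp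
          qed
          with nall show False by simp
        qed
        ultimately have "m w < a - \<delta>" by simp
        moreover have "m w \<in> (\<lambda>i. X i w) ` {..<n}" unfolding m_def using n0 by (intro Min_in) auto
        ultimately show ?thesis using w by auto
        qed
      qed
      have s1: "{w \<in> space M. \<exists>i<n. X i w < a - \<delta>} \<in> sets M" by measurable
      have s2: "{w \<in> space M. \<forall>i<n. a + \<delta> < X i w} \<in> sets M" by measurable
      have "measure M {w \<in> space M. Y n w > ennreal e} \<le>
          measure M ({w \<in> space M. \<exists>i<n. X i w < a - \<delta>} \<union> {w \<in> space M. \<forall>i<n. a + \<delta> < X i w})"
        by (rule finite_measure_mono[OF sub]) (use s1 s2 in auto)
      also have "\<dots> \<le> measure M {w \<in> space M. \<exists>i<n. X i w < a - \<delta>} + measure M {w \<in> space M. \<forall>i<n. a + \<delta> < X i w}"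
        by (rule measure_Un_le[OF s1 s2])
      also have "\<dots> \<le> real n * F (a - \<delta>) + (1 - F (a + \<delta>)) ^ n"
        using prob_ex_lt[of n "a - \<delta>"] prob_all_gt[OF n0, of "a + \<delta>"] by simp
      also have "\<dots> < r / 2 + r / 2"
      proof (rule add_less_le_mono)
        show "real n * F (a - \<delta>) < r / 2" using elim(1) Fa by blast
        have K: "2 / r \<le> real n * F (a + \<delta>)" using elim(2) Fa by blast
        have "(1 - F (a + \<delta>)) ^ n \<le> 1 / (1 + real n * F (a + \<delta>))"
          by (rule bern_aux) (use Fnn Fle in auto)
        also have "\<dots> \<le> 1 / (1 + 2 / r)"
        proof (rule divide_left_mono)
          have "0 < 1 + 2 / r" using r by (simp add: add_pos_nonneg)
          moreover have "0 < 1 + real n * F (a + \<delta>)" using K r by (smt (verit) divide_pos_pos)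
          ultimately show "0 < (1 + real n * F (a + \<delta>)) * (1 + 2 / r)" by simp
        qed (use K in auto)
        also have "\<dots> \<le> r / 2" using r by (simp add: field_simps)
        finally show "(1 - F (a + \<delta>)) ^ n \<le> r / 2" .
      qed
      finally show ?case by simp
    qed
    then obtain N where "\<And>n. n \<ge> N \<Longrightarrow> measure M {w \<in> space M. Y n w > ennreal e} < r"
      by (auto simp: eventually_sequentially)
    then show "\<exists>no. \<forall>n\<ge>no. norm (measure M {w \<in> space M. Y n w > ennreal e} - 0) < r"
      by (auto intro!: exI[of _ N])
  qed
  show ?thesis unfolding conv_prob_zero_def using key unfolding Y_def by blast
qed

lemma upper_conv:
  assumes Fc: "continuous_on UNIV F" and mo: "mono F" and bot: "(F \<longlongrightarrow> 0) at_bot"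
    and top: "(F \<longlongrightarrow> 1) at_top" and Fnn: "\<And>x. 0 \<le> F x" and Fle: "\<And>x. F x \<le> 1"
    and T: "tailc (\<lambda>x. 1 - F (- x))"
  shows "conv_prob_zero M (\<lambda>n w. ennreal (real n) *
        (\<integral>\<^sup>+ p \<in> {(real n - 1)/real n..1}. ennreal ((quantile (emp_cdf X n w) p - quantile F p)\<^sup>2) \<partial>lborel))"
proof -
  interpret prob_space M by (rule P)
  define Y where "Y = (\<lambda>n w. ennreal (real n) *
        (\<integral>\<^sup>+ p \<in> {(real n - 1)/real n..1}. ennreal ((quantile (emp_cdf X n w) p - quantile F p)\<^sup>2) \<partial>lborel))"
  have key: "(\<lambda>n. measure M {w \<in> space M. Y n w > ennreal e}) \<longlonglongrightarrow> 0" if e: "0 < e" for e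
  proof (rule LIMSEQ_I)
    fix r :: real assume r: "0 < r"
    define \<delta> where "\<delta> = sqrt e / 2"
    define c where "c = e / 8"
    have dpos: "0 < \<delta>" and cpos: "0 < c" using e by (auto simp: \<delta>_def c_def)
    have rr: "0 < r / 2" using r by simp
    have moG: "mono (\<lambda>x. 1 - F (- x))" using mo by (auto simp: mono_def)
    have d2: "\<delta>^2 = e / 4" using e by (simp add: \<delta>_def power_divide)
    have ev: "eventually (\<lambda>n. measure M {w \<in> space M. Y n w > ennreal e} < r) sequentially"
      using tail_L1[OF T dpos rr] tail_L2[OF T dpos moG, of "2/r"] tail_L3[OF T cpos]
        eventually_ge_at_top[of "2::nat"]
    proof eventually_elim
      case (elim n)
      have n0: "0 < n" using elim(4) by simp
      have np: "0 < (real n - 1) / real n" "(real n - 1) / real n < 1" using elim(4) by auto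
      define a where "a = quantile F ((real n - 1) / real n)"
      have Fa: "F a = (real n - 1) / real n" unfolding a_def by (rule quantile_props(1)[OF Fc mo bot top np])
      have Ga: "1 - F (- (- a)) = 1 / real n" using Fa n0 by (simp add: field_simps)
      have B: "(quantile F p - a)^2 \<le> c * (real n * (1 - p)) powr (-1/2)" if p: "(real n - 1) / real n \<le> p" "p < 1" for p
      proof -
        have p0: "0 < p" using p np by linarith
        have Fq: "F (quantile F p) = p" by (rule quantile_props(1)[OF Fc mo bot top p0 p(2)])
        have "a \<le> quantile F p" unfolding a_def using quantile_props(2)[OF Fc mo bot top np, of "quantile F p"] Fq p by simp
        then have le: "- quantile F p \<le> - a" by simp
        have G2: "1 - F (- (- quantile F p)) = 1 - p" using Fq by simp
        have p1: "0 < 1 - p" "1 - p \<le> 1 / real n" using p n0 by (auto simp: field_simps)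
        have "(- a - - quantile F p)^2 \<le> c * (real n * (1 - p)) powr (-1/2)"
          using elim(3) Ga G2 p1 le by blast
        then show ?thesis by (simp add: power2_commute)
      qed
      define m where "m w = Max ((\<lambda>i. X i w) ` {..<n})" for w
      have bound: "Y n w \<le> ennreal (2 * (m w - a)^2 + 4 * c)" for w
        unfolding Y_def m_def
        by (rule int_bound_upper[OF n0 _ B emp_quantile_max[OF n0]]) (use cpos in auto)
      have sub: "{w \<in> space M. Y n w > ennreal e} \<subseteq>
          {w \<in> space M. \<exists>i<n. a + \<delta> < X i w} \<union> {w \<in> space M. \<forall>i<n. X i w < a - \<delta>}"
      proof (intro subsetI)
        fix w assume "w \<in> {w \<in> space M. Y n w > ennreal e}"
        then have w: "w \<in> space M" "ennreal e < Y n w" by auto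
        show "w \<in> {w \<in> space M. \<exists>i<n. a + \<delta> < X i w} \<union> {w \<in> space M. \<forall>i<n. X i w < a - \<delta>}"
        proof (cases "\<forall>i<n. X i w < a - \<delta>")
          case True then show ?thesis using w by simp
        next
          case nall: False
        have "ennreal e < ennreal (2 * (m w - a)^2 + 4 * c)" using w(2) bound[of w] by (rule less_le_trans)
        then have "e < 2 * (m w - a)^2 + 4 * c" using e by (simp add: ennreal_less_iff)
        then have gt: "\<delta>^2 < (m w - a)^2" unfolding d2 c_def by simp
        have "\<not> \<bar>m w - a\<bar> \<le> \<delta>"
        proof
          assume "\<bar>m w - a\<bar> \<le> \<delta>"
          then have "(m w - a)^2 \<le> \<delta>^2" by (metis abs_ge_zero power2_abs power_mono)
          with gt show False by simp
        qed
        then have "m w < a - \<delta> \<or> a + \<delta> < m w" by linarith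
        moreover have "\<not> m w < a - \<delta>"
        proof
          assume "m w < a - \<delta>"
          have "\<forall>i<n. X i w < a - \<delta>"
          proof (intro allI impI)
            fix i assume "i < n"
            then have "X i w \<le> m w" unfolding m_def by (intro Max_ge) auto
            with \<open>m w < a - \<delta>\<close> show "X i w < a - \<delta>" by simp
          qed
          with nall show False by simp
        qed
        ultimately have "a + \<delta> < m w" by simp
        moreover have "m w \<in> (\<lambda>i. X i w) ` {..<n}" unfolding m_def using n0 by (intro Max_in) auto
        ultimately show ?thesis using w by auto
        qed
      qed
      have s1: "{w \<in> space M. \<exists>i<n. a + \<delta> < X i w} \<in> sets M" by measurable
      have s2: "{w \<in> space M. \<forall>i<n. X i w < a - \<delta>} \<in> sets M" by measurable
      have "measure M {w \<in> space M. Y n w > ennreal e} \<le>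
          measure M ({w \<in> space M. \<exists>i<n. a + \<delta> < X i w} \<union> {w \<in> space M. \<forall>i<n. X i w < a - \<delta>})"
        by (rule finite_measure_mono[OF sub]) (use s1 s2 in auto)
      also have "\<dots> \<le> measure M {w \<in> space M. \<exists>i<n. a + \<delta> < X i w} + measure M {w \<in> space M. \<forall>i<n. X i w < a - \<delta>}"
        by (rule measure_Un_le[OF s1 s2])
      also have "\<dots> \<le> real n * (1 - F (a + \<delta>)) + F (a - \<delta>) ^ n"
        using prob_ex_gt[of n "a + \<delta>"] prob_all_lt[OF n0, of "a - \<delta>"] by simp
      also have "\<dots> < r / 2 + r / 2"
      proof (rule add_less_le_mono)
        show "real n * (1 - F (a + \<delta>)) < r / 2" using elim(1)[rule_format, of "- a"] Ga by (simp add: algebra_simps)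
        have K: "2 / r \<le> real n * (1 - F (a - \<delta>))" using elim(2)[rule_format, of "- a"] Ga by (simp add: algebra_simps)
        have "F (a - \<delta>) ^ n = (1 - (1 - F (a - \<delta>))) ^ n" by simp
        also have "\<dots> \<le> 1 / (1 + real n * (1 - F (a - \<delta>)))"
          by (rule bern_aux) (use Fnn Fle in auto)
        also have "\<dots> \<le> 1 / (1 + 2 / r)"
        proof (rule divide_left_mono)
          have "0 < 1 + 2 / r" using r by (simp add: add_pos_nonneg)
          moreover have "0 < 1 + real n * (1 - F (a - \<delta>))" using K r by (smt (verit) divide_pos_pos)
          ultimately show "0 < (1 + real n * (1 - F (a - \<delta>))) * (1 + 2 / r)" by simp
        qed (use K in auto)
        also have "\<dots> \<le> r / 2" using r by (simp add: field_simps)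
        finally show "F (a - \<delta>) ^ n \<le> r / 2" .
      qed
      finally show ?case by simp
    qed
    then obtain N where "\<And>n. n \<ge> N \<Longrightarrow> measure M {w \<in> space M. Y n w > ennreal e} < r"
      by (auto simp: eventually_sequentially)
    then show "\<exists>no. \<forall>n\<ge>no. norm (measure M {w \<in> space M. Y n w > ennreal e} - 0) < r"
      by (auto intro!: exI[of _ N])
  qed
  show ?thesis unfolding conv_prob_zero_def using key unfolding Y_def by blast
qed

end

theorem theorem3p2:
  fixes M :: "'a measure" and X :: "nat \<Rightarrow> 'a \<Rightarrow> real"
    and F f :: "real \<Rightarrow> real"
  assumes "prob_space M"
    and "\<And>i. X i \<in> borel_measurable M"
    and "prob_space.indep_vars M (\<lambda>_. borel) X UNIV"
    and "\<And>i. distr M borel (X i) = distr M borel (X 0)"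
    and "\<And>x. F x = measure M {w \<in> space M. X 0 w \<le> x}"
    and "integrable M (\<lambda>w. (X 0 w)\<^sup>2)"
    and "\<And>x. 0 \<le> f x"
    and "continuous_on UNIV f"
    and "distributed M lborel (X 0) (\<lambda>x. ennreal (f x))"
  shows "(filterlim (hazard F f) at_top at_infinity \<longrightarrow> condition1 M X F)
       \<and> (((\<forall>x. 0 < F x \<and> F x < 1 \<longrightarrow> 0 < f x) \<and>
           (\<integral>\<^sup>+ x \<in> {x. 0 < F x \<and> F x < 1}. ennreal (F x * (1 - F x) / f x) \<partial>lborel) < \<infinity>)
          \<longrightarrow> condition1 M X F)"
proof -
  interpret iidsetup M X F by (rule iidsetup.intro[OF assms(1-5)])
  note FP = F_props[OF assms(1) assms(2)[of 0] assms(5) assms(7) assms(8) assms(9)]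
  have C1: "condition1 M X F" if TL: "tailc F" and TU: "tailc (\<lambda>x. 1 - F (- x))"
    unfolding condition1_def
    using lower_conv[OF FP(7) FP(2) FP(3) FP(4) FP(5) FP(6) TL]
          upper_conv[OF FP(7) FP(2) FP(3) FP(4) FP(5) FP(6) TU] by blast
  show ?thesis
  proof (intro conjI impI)
    assume H: "filterlim (hazard F f) at_top at_infinity"
    note HS = hazard_split[OF H]
    show "condition1 M X F"
    proof (rule C1)
      show "tailc F" by (rule tailc_hazard[OF FP(1) FP(2) FP(5) HS(1)])
      show "tailc (\<lambda>x. 1 - F (- x))" by (rule tailc_upper_hazard[OF FP(1) FP(2) FP(5) FP(6) HS(2)])
    qed
  next
    assume H: "(\<forall>x. 0 < F x \<and> F x < 1 \<longrightarrow> 0 < f x) \<and>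
           (\<integral>\<^sup>+ x \<in> {x. 0 < F x \<and> F x < 1}. ennreal (F x * (1 - F x) / f x) \<partial>lborel) < \<infinity>"
    have fpos: "\<And>x. 0 < F x \<Longrightarrow> F x < 1 \<Longrightarrow> 0 < f x" using H by blast
    have fin: "(\<integral>\<^sup>+ x \<in> {x. 0 < F x \<and> F x < 1}. ennreal (F x * (1 - F x) / f x) \<partial>lborel) < \<infinity>" using H by blast
    show "condition1 M X F"
    proof (rule C1)
      show "tailc F" by (rule tailc_cond2[OF FP(1) FP(2) FP(5) FP(6) fpos assms(8) assms(7) fin])
      show "tailc (\<lambda>x. 1 - F (- x))" by (rule tailc_upper_cond2[OF FP(1) FP(2) FP(5) FP(6) fpos assms(8) assms(7) fin])
    qed
  qed
qed

end
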